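(* Let $r, s \ge 5$ be integers. Then the graph $P_r \,\square\, P_s$ has a unique $\mathrm{gp_e}$-set, i.e., there is exactly one edge general position set of $P_r \,\square\, P_s$ of cardinality $\mathrm{gp_e}(P_r \,\square\, P_s)$.
   Context: $P_n$ denotes the path on $n$ vertices. The Cartesian product $G \,\square\, H$ has vertex set $V(G)\times V(H)$, with $(g,h)$ adjacent to $(g',h')$ iff either $gg' \in E(G)$ and $h = h'$, or $g = g'$ and $hh' \in E(H)$. A set $S$ of edges of a graph $G$ is an edge general position set if no geodesic (shortest path) of $G$ contains three edges of $S$; $\mathrm{gp_e}(G)$ is the maximum cardinality of an edge general position set of $G$, and an edge general position set of maximum cardinality is called a $\mathrm{gp_e}$-set. *)

theory Defs
  imports Main
begin

text \<open>A (simple, undirected) graph is given by a vertex set V and a symmetric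
  adjacency relation E; only adjacencies between vertices of V matter.\<close>

definition path_V :: "nat \<Rightarrow> nat set" where
  "path_V n = {0..<n}"

definition path_adj :: "nat \<Rightarrow> nat \<Rightarrow> bool" where
  "path_adj i j \<longleftrightarrow> (i + 1 = j \<or> j + 1 = i)"

definition cart_V :: "'a set \<Rightarrow> 'b set \<Rightarrow> ('a \<times> 'b) set" where
  "cart_V VG VH = VG \<times> VH"

definition cart_adj :: "('a \<Rightarrow> 'a \<Rightarrow> bool) \<Rightarrow> ('b \<Rightarrow> 'b \<Rightarrow> bool)
    \<Rightarrow> ('a \<times> 'b) \<Rightarrow> ('a \<times> 'b) \<Rightarrow> bool" where
  "cart_adj EG EH x y \<longleftrightarrow>
     (EG (fst x) (fst y) \<and> snd x = snd y) \<or> (fst x = fst y \<and> EH (snd x) (snd y))"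

definition graph_edges :: "'a set \<Rightarrow> ('a \<Rightarrow> 'a \<Rightarrow> bool) \<Rightarrow> 'a set set" where
  "graph_edges V E = {{u, v} | u v. u \<in> V \<and> v \<in> V \<and> E u v}"

definition walk :: "'a set \<Rightarrow> ('a \<Rightarrow> 'a \<Rightarrow> bool) \<Rightarrow> 'a list \<Rightarrow> bool" where
  "walk V E xs \<longleftrightarrow> xs \<noteq> [] \<and> set xs \<subseteq> V \<and>
     (\<forall>i. Suc i < length xs \<longrightarrow> E (xs ! i) (xs ! Suc i))"

definition geodesic :: "'a set \<Rightarrow> ('a \<Rightarrow> 'a \<Rightarrow> bool) \<Rightarrow> 'a list \<Rightarrow> bool" where
  "geodesic V E xs \<longleftrightarrow> walk V E xs \<and>
     (\<forall>ys. walk V E ys \<and> hd ys = hd xs \<and> last ys = last xs \<longrightarrow> length xs \<le> length ys)"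

definition walk_edges :: "'a list \<Rightarrow> 'a set set" where
  "walk_edges xs = {{xs ! i, xs ! Suc i} | i. Suc i < length xs}"

definition edge_gp_set :: "'a set \<Rightarrow> ('a \<Rightarrow> 'a \<Rightarrow> bool) \<Rightarrow> 'a set set \<Rightarrow> bool" where
  "edge_gp_set V E S \<longleftrightarrow> S \<subseteq> graph_edges V E \<and>
     (\<forall>xs. geodesic V E xs \<longrightarrow> card (S \<inter> walk_edges xs) < 3)"

definition gpe :: "'a set \<Rightarrow> ('a \<Rightarrow> 'a \<Rightarrow> bool) \<Rightarrow> nat" where
  "gpe V E = Max {card S | S. edge_gp_set V E S}"

definition gpe_set :: "'a set \<Rightarrow> ('a \<Rightarrow> 'a \<Rightarrow> bool) \<Rightarrow> 'a set set \<Rightarrow> bool" where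
  "gpe_set V E S \<longleftrightarrow> edge_gp_set V E S \<and> card S = gpe V E"

end

theory Submission
  imports Defs
begin

abbreviation GV :: "nat \<Rightarrow> nat \<Rightarrow> (nat \<times> nat) set" where
  "GV r s \<equiv> cart_V (path_V r) (path_V s)"
abbreviation GA :: "nat \<times> nat \<Rightarrow> nat \<times> nat \<Rightarrow> bool" where
  "GA \<equiv> cart_adj path_adj path_adj"

definition nd :: "nat \<Rightarrow> nat \<Rightarrow> nat" where "nd a b = (a - b) + (b - a)"
definition md :: "nat \<times> nat \<Rightarrow> nat \<times> nat \<Rightarrow> nat" where
  "md p q = nd (fst p) (fst q) + nd (snd p) (snd q)"

lemma GV_iff: "p \<in> GV r s \<longleftrightarrow> fst p < r \<and> snd p < s"
  by (cases p) (auto simp: cart_V_def path_V_def)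
lemma nd_tri: "nd a c \<le> nd a b + nd b c"
  unfolding nd_def by linarith
lemma md_tri: "md p w \<le> md p q + md q w"
  unfolding md_def using nd_tri[of "fst p" "fst w" "fst q"] nd_tri[of "snd p" "snd w" "snd q"] by linarith
lemma nd_sym: "nd a b = nd b a" unfolding nd_def by simp
lemma md_sym: "md p q = md q p" unfolding md_def by (simp add: nd_sym)
lemma nd_1: "nd a b = 1 \<longleftrightarrow> a + 1 = b \<or> b + 1 = a" unfolding nd_def by linarith
lemma nd_0: "nd a b = 0 \<longleftrightarrow> a = b" unfolding nd_def by linarith
lemma md_0: "md p q = 0 \<longleftrightarrow> p = q" unfolding md_def by (cases p; cases q) (auto simp: nd_0)
lemma nd_le: "a \<le> b \<Longrightarrow> nd a b = b - a" "b \<le> a \<Longrightarrow> nd a b = a - b" unfolding nd_def by auto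
lemma GA_iff: "GA p q \<longleftrightarrow> md p q = 1"
proof -
  have "md p q = 1 \<longleftrightarrow> (nd (fst p) (fst q) = 1 \<and> nd (snd p) (snd q) = 0) \<or> (nd (fst p) (fst q) = 0 \<and> nd (snd p) (snd q) = 1)"
    unfolding md_def by linarith
  then show ?thesis unfolding cart_adj_def path_adj_def nd_0 nd_1 by auto
qed

lemma walk_single: "walk V E [x] \<longleftrightarrow> x \<in> V"
  unfolding walk_def by auto

lemma walk_Cons2: "walk V E (x # y # ys) \<longleftrightarrow> x \<in> V \<and> E x y \<and> walk V E (y # ys)"
proof
  assume a: "walk V E (x # y # ys)"
  have "\<forall>i. Suc i < length (y # ys) \<longrightarrow> E ((y#ys) ! i) ((y#ys) ! Suc i)"
  proof (intro allI impI)
    fix i assume "Suc i < length (y # ys)"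
    then have "Suc (Suc i) < length (x # y # ys)" by simp
    with a have "E ((x#y#ys) ! Suc i) ((x#y#ys) ! Suc (Suc i))" unfolding walk_def by blast
    then show "E ((y#ys) ! i) ((y#ys) ! Suc i)" by simp
  qed
  moreover have "E x y" using a unfolding walk_def by (metis length_Cons nth_Cons_0 nth_Cons_Suc zero_less_Suc Suc_mono)
  ultimately show "x \<in> V \<and> E x y \<and> walk V E (y # ys)" using a unfolding walk_def by auto
next
  assume a: "x \<in> V \<and> E x y \<and> walk V E (y # ys)"
  show "walk V E (x # y # ys)" unfolding walk_def
  proof (intro conjI allI impI)
    show "set (x # y # ys) \<subseteq> V" using a unfolding walk_def by auto
    fix i assume i: "Suc i < length (x # y # ys)"
    show "E ((x # y # ys) ! i) ((x # y # ys) ! Suc i)"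
    proof (cases i)
      case 0 then show ?thesis using a by simp
    next
      case (Suc j) then show ?thesis using a i unfolding walk_def by auto
    qed
  qed simp
qed

lemma walk_edges_single: "walk_edges [x] = {}"
  unfolding walk_edges_def by auto

lemma walk_edges_Cons2: "walk_edges (x # y # ys) = insert {x, y} (walk_edges (y # ys))"
proof
  show "walk_edges (x # y # ys) \<subseteq> insert {x, y} (walk_edges (y # ys))"
  proof
    fix e assume "e \<in> walk_edges (x # y # ys)"
    then obtain i where i: "Suc i < length (x#y#ys)" "e = {(x#y#ys) ! i, (x#y#ys) ! Suc i}"
      unfolding walk_edges_def by blast
    show "e \<in> insert {x, y} (walk_edges (y # ys))"
    proof (cases i)
      case 0 then show ?thesis using i by simp
    next
      case (Suc j) then show ?thesis using i unfolding walk_edges_def by auto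
    qed
  qed
next
  show "insert {x, y} (walk_edges (y # ys)) \<subseteq> walk_edges (x # y # ys)"
  proof
    fix e assume "e \<in> insert {x, y} (walk_edges (y # ys))"
    then consider "e = {x,y}" | j where "Suc j < length (y#ys)" "e = {(y#ys) ! j, (y#ys) ! Suc j}"
      unfolding walk_edges_def by blast
    then show "e \<in> walk_edges (x # y # ys)"
    proof cases
      case 1 then show ?thesis unfolding walk_edges_def
        by (smt (verit) Suc_less_eq length_Cons mem_Collect_eq nth_Cons_0 nth_Cons_Suc zero_less_Suc)
    next
      case 2 then show ?thesis unfolding walk_edges_def
        by (smt (verit) Suc_less_eq length_Cons mem_Collect_eq nth_Cons_Suc)
    qed
  qed
qed

lemma walk_ne: "walk V E xs \<Longrightarrow> xs \<noteq> []" unfolding walk_def by simp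

lemma walk_cat:
  assumes "walk V E xs" "walk V E ys" "last xs = hd ys"
  shows "walk V E (xs @ tl ys) \<and> hd (xs @ tl ys) = hd xs \<and> last (xs @ tl ys) = last ys
    \<and> length (xs @ tl ys) = length xs + length ys - 1
    \<and> walk_edges xs \<union> walk_edges ys \<subseteq> walk_edges (xs @ tl ys)"
  using assms
proof (induction xs rule: induct_list012)
  case 1 then show ?case by (simp add: walk_def)
next
  case (2 x)
  then have "ys = x # tl ys" using walk_ne by (metis list.collapse last_ConsL)
  then show ?case using 2 by (auto simp: walk_edges_single)
next
  case (3 x y zs)
  have ih: "walk V E (y # (zs @ tl ys)) \<and> last (y # (zs @ tl ys)) = last ys \<and>
    length (y # (zs @ tl ys)) = length (y # zs) + length ys - 1 \<and>
    walk_edges (y # zs) \<union> walk_edges ys \<subseteq> walk_edges (y # (zs @ tl ys))"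
  proof -
    have a1: "walk V E (y#zs)" using 3(3) by (simp add: walk_Cons2)
    have a2: "last (y#zs) = hd ys" using 3(5) by simp
    have "ys \<noteq> []" using 3 walk_ne by blast
    then show ?thesis using 3(2)[OF a1 3(4) a2] by simp
  qed
  have ne: "ys \<noteq> []" using 3 walk_ne by blast
  have w: "walk V E (x # y # (zs @ tl ys))" using ih 3(3) by (simp add: walk_Cons2)
  have e: "walk_edges (x # y # zs) \<union> walk_edges ys \<subseteq> walk_edges (x # y # (zs @ tl ys))"
    using ih unfolding walk_edges_Cons2 by blast
  show ?case using w e ih ne by simp
qed

lemma walk_rev:
  assumes "walk V E xs" "\<And>u v. E u v \<Longrightarrow> E v u"
  shows "walk V E (rev xs)"
  unfolding walk_def
proof (intro conjI allI impI)
  show "rev xs \<noteq> []" "set (rev xs) \<subseteq> V" using assms(1) unfolding walk_def by auto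
  fix i assume i: "Suc i < length (rev xs)"
  let ?n = "length xs"
  have "E (xs ! (?n - Suc (Suc i))) (xs ! Suc (?n - Suc (Suc i)))"
    using assms(1) i unfolding walk_def by auto
  moreover have "Suc (?n - Suc (Suc i)) = ?n - Suc i" using i by simp
  ultimately show "E (rev xs ! i) (rev xs ! Suc i)" using i assms(2)
    by (simp add: rev_nth)
qed

lemma walk_edges_rev: "walk_edges xs \<subseteq> walk_edges (rev xs)"
proof
  fix e assume "e \<in> walk_edges xs"
  then obtain i where i: "Suc i < length xs" "e = {xs ! i, xs ! Suc i}" unfolding walk_edges_def by blast
  let ?j = "length xs - Suc (Suc i)"
  have "rev xs ! ?j = xs ! Suc i" "rev xs ! Suc ?j = xs ! i" using i
    by (simp_all add: rev_nth Suc_diff_Suc)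
  then have "e = {rev xs ! ?j, rev xs ! Suc ?j}" "Suc ?j < length (rev xs)" using i by auto
  then show "e \<in> walk_edges (rev xs)" unfolding walk_edges_def by blast
qed

definition hE :: "nat \<Rightarrow> nat \<Rightarrow> (nat \<times> nat) set" where "hE x y = {(x,y),(Suc x,y)}"
definition vE :: "nat \<Rightarrow> nat \<Rightarrow> (nat \<times> nat) set" where "vE x y = {(x,y),(x,Suc y)}"
definition RW :: "nat \<Rightarrow> nat \<Rightarrow> nat \<Rightarrow> (nat \<times> nat) set set" where
  "RW y a b = {hE k y | k. a \<le> k \<and> k < b}"
definition CL :: "nat \<Rightarrow> nat \<Rightarrow> nat \<Rightarrow> (nat \<times> nat) set set" where
  "CL x a b = {vE x k | k. a \<le> k \<and> k < b}"
definition seg :: "nat \<times> nat \<Rightarrow> nat \<times> nat \<Rightarrow> (nat \<times> nat) set set" where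
  "seg p q = (if fst p = fst q then CL (fst p) (min (snd p) (snd q)) (max (snd p) (snd q)) else {})
     \<union> (if snd p = snd q then RW (snd p) (min (fst p) (fst q)) (max (fst p) (fst q)) else {})"

lemma hE_eq[simp]: "hE x y = hE x' y' \<longleftrightarrow> x = x' \<and> y = y'"
  unfolding hE_def by (auto simp: doubleton_eq_iff)
lemma vE_eq[simp]: "vE x y = vE x' y' \<longleftrightarrow> x = x' \<and> y = y'"
  unfolding vE_def by (auto simp: doubleton_eq_iff)
lemma hE_vE[simp]: "hE x y \<noteq> vE x' y'" "vE x' y' \<noteq> hE x y"
  unfolding vE_def hE_def by (auto simp: doubleton_eq_iff)

lemma mem_RW[simp]: "e \<in> RW y a b \<longleftrightarrow> (\<exists>k. e = hE k y \<and> a \<le> k \<and> k < b)"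
  unfolding RW_def by blast
lemma mem_CL[simp]: "e \<in> CL x a b \<longleftrightarrow> (\<exists>k. e = vE x k \<and> a \<le> k \<and> k < b)"
  unfolding CL_def by blast

lemma CL_empty[simp]: "CL x a a = {}" by auto
lemma RW_empty[simp]: "RW y a a = {}" by auto

definition gw :: "nat \<Rightarrow> nat \<Rightarrow> nat \<times> nat \<Rightarrow> nat \<times> nat \<Rightarrow> nat \<Rightarrow> (nat \<times> nat) set set \<Rightarrow> bool" where
  "gw r s p q n E \<longleftrightarrow> (\<exists>xs. walk (GV r s) GA xs \<and> hd xs = p \<and> last xs = q \<and> length xs = Suc n
      \<and> E \<subseteq> walk_edges xs)"

lemma gw_cat: "gw r s p q n1 E1 \<Longrightarrow> gw r s q w n2 E2 \<Longrightarrow> gw r s p w (n1 + n2) (E1 \<union> E2)"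
  unfolding gw_def
proof (elim exE conjE)
  fix xs ys assume a: "walk (GV r s) GA xs" "hd xs = p" "last xs = q" "length xs = Suc n1" "E1 \<subseteq> walk_edges xs"
    "walk (GV r s) GA ys" "hd ys = q" "last ys = w" "length ys = Suc n2" "E2 \<subseteq> walk_edges ys"
  then have "last xs = hd ys" by simp
  from walk_cat[OF a(1) a(6) this] a show "\<exists>zs. walk (GV r s) GA zs \<and> hd zs = p \<and> last zs = w \<and>
    length zs = Suc (n1 + n2) \<and> E1 \<union> E2 \<subseteq> walk_edges zs"
    by (intro exI[of _ "xs @ tl ys"]) auto
qed

lemma gw_mono: "gw r s p q n E \<Longrightarrow> E' \<subseteq> E \<Longrightarrow> gw r s p q n E'"
  unfolding gw_def by blast

lemma GA_sym: "GA u v \<Longrightarrow> GA v u" by (simp add: GA_iff md_sym)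

lemma gw_rev: "gw r s p q n E \<Longrightarrow> gw r s q p n E"
  unfolding gw_def
proof (elim exE conjE)
  fix xs assume a: "walk (GV r s) GA xs" "hd xs = p" "last xs = q" "length xs = Suc n" "E \<subseteq> walk_edges xs"
  have ne: "xs \<noteq> []" using a walk_ne by blast
  show "\<exists>zs. walk (GV r s) GA zs \<and> hd zs = q \<and> last zs = p \<and> length zs = Suc n \<and> E \<subseteq> walk_edges zs"
    using a ne walk_rev[OF a(1) GA_sym] walk_edges_rev[of xs]
    by (intro exI[of _ "rev xs"]) (auto simp: hd_rev last_rev)
qed

lemma gw_0: "p \<in> GV r s \<Longrightarrow> gw r s p p 0 {}"
  unfolding gw_def by (intro exI[of _ "[p]"]) (simp add: walk_single)

lemma gw_1: "p \<in> GV r s \<Longrightarrow> q \<in> GV r s \<Longrightarrow> md p q = 1 \<Longrightarrow> gw r s p q 1 {{p,q}}"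
  unfolding gw_def by (intro exI[of _ "[p,q]"]) (simp add: walk_single walk_Cons2 walk_edges_Cons2 GA_iff)

lemma gw_up: "x < r \<Longrightarrow> a + n < s \<Longrightarrow> gw r s (x,a) (x,a+n) n (CL x a (a+n))"
proof (induction n)
  case 0 then show ?case using gw_0[of "(x,a)" r s] by (auto simp: GV_iff intro: gw_mono)
next
  case (Suc n)
  have 1: "gw r s (x,a) (x,a+n) n (CL x a (a+n))" using Suc by simp
  have 2: "gw r s (x,a+n) (x,a+Suc n) 1 {vE x (a+n)}" unfolding vE_def
    using Suc.prems gw_1[of "(x,a+n)" r s "(x, Suc (a+n))"] by (simp add: GV_iff md_def nd_def)
  have "CL x a (a + Suc n) \<subseteq> CL x a (a+n) \<union> {vE x (a+n)}" by (auto simp: less_Suc_eq)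
  then show ?case using gw_cat[OF 1 2] by (auto intro: gw_mono)
qed

lemma gw_right: "y < s \<Longrightarrow> a + n < r \<Longrightarrow> gw r s (a,y) (a+n,y) n (RW y a (a+n))"
proof (induction n)
  case 0 then show ?case using gw_0[of "(a,y)" r s] by (auto simp: GV_iff intro: gw_mono)
next
  case (Suc n)
  have 1: "gw r s (a,y) (a+n,y) n (RW y a (a+n))" using Suc by simp
  have 2: "gw r s (a+n,y) (a+Suc n,y) 1 {hE (a+n) y}" unfolding hE_def
    using Suc.prems gw_1[of "(a+n,y)" r s "(Suc (a+n),y)"] by (simp add: GV_iff md_def nd_def)
  have "RW y a (a + Suc n) \<subseteq> RW y a (a+n) \<union> {hE (a+n) y}" by (auto simp: less_Suc_eq)
  then show ?case using gw_cat[OF 1 2] by (auto intro: gw_mono)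
qed

lemma gw_line:
  assumes "p \<in> GV r s" "q \<in> GV r s" "fst p = fst q \<or> snd p = snd q"
  shows "gw r s p q (md p q) (seg p q)"
proof -
  obtain x1 y1 x2 y2 where pq: "p = (x1,y1)" "q = (x2,y2)" by (cases p; cases q)
  have b: "x1 < r" "x2 < r" "y1 < s" "y2 < s" using assms pq by (auto simp: GV_iff)
  consider "x1 = x2" "y1 \<le> y2" | "x1 = x2" "y2 < y1" | "y1 = y2" "x1 \<le> x2" | "y1 = y2" "x2 < x1"
    using assms(3) pq by force
  then show ?thesis
  proof cases
    case 1
    with gw_up[of x1 r y1 "y2 - y1" s] b have "gw r s p q (y2 - y1) (CL x1 y1 y2)" using pq by simp
    moreover have "seg p q = CL x1 y1 y2" using 1 pq unfolding seg_def by (auto simp: RW_def)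
    moreover have "md p q = y2 - y1" using 1 pq by (simp add: md_def nd_def)
    ultimately show ?thesis by simp
  next
    case 2
    with gw_up[of x1 r y2 "y1 - y2" s] b have "gw r s q p (y1 - y2) (CL x1 y2 y1)" using pq by simp
    moreover have "seg p q = CL x1 y2 y1" using 2 pq unfolding seg_def by auto
    moreover have "md p q = y1 - y2" using 2 pq by (simp add: md_def nd_def)
    ultimately show ?thesis by (simp add: gw_rev)
  next
    case 3
    with gw_right[of y1 s x1 "x2 - x1" r] b have "gw r s p q (x2 - x1) (RW y1 x1 x2)" using pq by simp
    moreover have "seg p q = RW y1 x1 x2" using 3 pq unfolding seg_def by (auto simp: CL_def)
    moreover have "md p q = x2 - x1" using 3 pq by (simp add: md_def nd_def)
    ultimately show ?thesis by simp
  next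
    case 4
    with gw_right[of y1 s x2 "x1 - x2" r] b have "gw r s q p (x1 - x2) (RW y1 x2 x1)" using pq by simp
    moreover have "seg p q = RW y1 x2 x1" using 4 pq unfolding seg_def by auto
    moreover have "md p q = x1 - x2" using 4 pq by (simp add: md_def nd_def)
    ultimately show ?thesis by (simp add: gw_rev)
  qed
qed

lemma walk_md:
  assumes "walk (GV r s) GA xs" "i \<le> j" "j < length xs"
  shows "md (xs ! i) (xs ! j) \<le> j - i"
  using assms(2,3)
proof (induction j)
  case 0 then show ?case by (simp add: md_0)
next
  case (Suc j)
  show ?case
  proof (cases "i = Suc j")
    case True then show ?thesis by (simp add: md_0)
  next
    case False
    then have ij: "i \<le> j" using Suc by simp
    have "GA (xs ! j) (xs ! Suc j)" using assms(1) Suc.prems unfolding walk_def by blast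
    then have "md (xs ! j) (xs ! Suc j) = 1" by (simp add: GA_iff)
    moreover have "md (xs ! i) (xs ! j) \<le> j - i" using Suc ij by simp
    ultimately show ?thesis using md_tri[of "xs ! i" "xs ! Suc j" "xs ! j"] ij by linarith
  qed
qed

lemma walk_md_hd_last:
  assumes "walk (GV r s) GA xs"
  shows "md (hd xs) (last xs) < length xs"
proof -
  have ne: "xs \<noteq> []" using assms walk_ne by blast
  then have h: "hd xs = xs ! 0" "last xs = xs ! (length xs - 1)" by (simp_all add: hd_conv_nth last_conv_nth)
  have l: "length xs > 0" using ne by simp
  have "md (hd xs) (last xs) \<le> length xs - 1" using walk_md[OF assms, of 0 "length xs - 1"] h l by simp
  then show ?thesis using l by linarith
qed

lemma gw_conn:
  assumes "p \<in> GV r s" "q \<in> GV r s"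
  shows "gw r s p q (md p q) {}"
proof -
  let ?c = "(fst q, snd p)"
  have c: "?c \<in> GV r s" using assms by (simp add: GV_iff)
  have 1: "gw r s p ?c (md p ?c) (seg p ?c)" using gw_line[OF assms(1) c] by simp
  have 2: "gw r s ?c q (md ?c q) (seg ?c q)" using gw_line[OF c assms(2)] by simp
  have "md p ?c + md ?c q = md p q" by (simp add: md_def nd_def)
  then show ?thesis using gw_cat[OF 1 2] by (metis empty_subsetI gw_mono)
qed

lemma walk_in: "walk V E xs \<Longrightarrow> hd xs \<in> V \<and> last xs \<in> V"
  unfolding walk_def by auto

lemma geo_iff:
  "geodesic (GV r s) GA xs \<longleftrightarrow> walk (GV r s) GA xs \<and> length xs = Suc (md (hd xs) (last xs))"
proof
  assume g: "geodesic (GV r s) GA xs"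
  then have w: "walk (GV r s) GA xs" unfolding geodesic_def by blast
  obtain ys where ys: "walk (GV r s) GA ys" "hd ys = hd xs" "last ys = last xs"
      "length ys = Suc (md (hd xs) (last xs))"
    using gw_conn[of "hd xs" r s "last xs"] walk_in[OF w] unfolding gw_def by blast
  then have "length xs \<le> length ys" using g unfolding geodesic_def by blast
  then show "walk (GV r s) GA xs \<and> length xs = Suc (md (hd xs) (last xs))"
    using walk_md_hd_last[OF w] ys w by simp
next
  assume a: "walk (GV r s) GA xs \<and> length xs = Suc (md (hd xs) (last xs))"
  show "geodesic (GV r s) GA xs" unfolding geodesic_def
  proof (intro conjI allI impI)
    show "walk (GV r s) GA xs" using a by simp
    fix ys assume "walk (GV r s) GA ys \<and> hd ys = hd xs \<and> last ys = last xs"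
    then show "length xs \<le> length ys" using walk_md_hd_last[of r s ys] a by simp
  qed
qed

lemma gw_geo:
  assumes "gw r s p q (md p q) E"
  shows "\<exists>xs. geodesic (GV r s) GA xs \<and> E \<subseteq> walk_edges xs"
  using assms unfolding gw_def geo_iff by auto

lemma geo_dist:
  assumes g: "geodesic (GV r s) GA xs" and ij: "i \<le> j" "j < length xs"
  shows "md (xs ! i) (xs ! j) = j - i"
proof -
  have w: "walk (GV r s) GA xs" and l: "length xs = Suc (md (hd xs) (last xs))" using g geo_iff by auto
  have ne: "xs \<noteq> []" using w walk_ne by blast
  let ?n = "length xs - 1"
  have "hd xs = xs ! 0" "last xs = xs ! ?n" using ne by (simp_all add: hd_conv_nth last_conv_nth)
  then have e: "md (xs ! 0) (xs ! ?n) = ?n" using l by simp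
  have 1: "md (xs ! 0) (xs ! i) \<le> i" using walk_md[OF w, of 0 i] ij by simp
  have 2: "md (xs ! i) (xs ! j) \<le> j - i" using walk_md[OF w, of i j] ij by simp
  have 3: "md (xs ! j) (xs ! ?n) \<le> ?n - j" using walk_md[OF w, of j ?n] ij by simp
  have "md (xs ! 0) (xs ! ?n) \<le> md (xs ! 0) (xs ! i) + md (xs ! i) (xs ! j) + md (xs ! j) (xs ! ?n)"
    using md_tri[of "xs ! 0" "xs ! ?n" "xs ! i"] md_tri[of "xs ! i" "xs ! ?n" "xs ! j"] by linarith
  then show ?thesis using e 1 2 3 ij by linarith
qed

definition Bt :: "nat \<Rightarrow> nat \<Rightarrow> nat \<Rightarrow> bool" where
  "Bt a b c \<longleftrightarrow> (a \<le> b \<and> b \<le> c) \<or> (c \<le> b \<and> b \<le> a)"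

lemma nd_Bt: "nd a c = nd a b + nd b c \<Longrightarrow> Bt a b c"
  unfolding nd_def Bt_def by linarith

definition btw :: "(nat \<times> nat) \<Rightarrow> (nat \<times> nat) \<Rightarrow> (nat \<times> nat) \<Rightarrow> bool" where
  "btw a b c \<longleftrightarrow> Bt (fst a) (fst b) (fst c) \<and> Bt (snd a) (snd b) (snd c)"

lemma btw_sym: "btw a b c \<Longrightarrow> btw c b a" unfolding btw_def Bt_def by auto

lemma geo_btw:
  assumes g: "geodesic (GV r s) GA xs" and ijk: "i \<le> j" "j \<le> k" "k < length xs"
  shows "btw (xs ! i) (xs ! j) (xs ! k)"
proof -
  have "md (xs ! i) (xs ! k) = md (xs ! i) (xs ! j) + md (xs ! j) (xs ! k)"
    using geo_dist[OF g, of i k] geo_dist[OF g, of i j] geo_dist[OF g, of j k] ijk by simp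
  moreover have "nd (fst (xs ! i)) (fst (xs ! k)) \<le> nd (fst (xs ! i)) (fst (xs ! j)) + nd (fst (xs ! j)) (fst (xs ! k))"
    by (rule nd_tri)
  moreover have "nd (snd (xs ! i)) (snd (xs ! k)) \<le> nd (snd (xs ! i)) (snd (xs ! j)) + nd (snd (xs ! j)) (snd (xs ! k))"
    by (rule nd_tri)
  ultimately show ?thesis unfolding btw_def md_def by (intro conjI nd_Bt) linarith+
qed

lemma geo_mid:
  assumes g: "geodesic (GV r s) GA xs" and l: "i < length xs" "j < length xs" "k < length xs"
  shows "btw (xs ! i) (xs ! j) (xs ! k) \<or> btw (xs ! j) (xs ! i) (xs ! k) \<or> btw (xs ! i) (xs ! k) (xs ! j)"
proof -
  have "i \<le> j \<and> j \<le> k \<or> k \<le> j \<and> j \<le> i \<or> j \<le> i \<and> i \<le> k \<or> k \<le> i \<and> i \<le> j \<or> i \<le> k \<and> k \<le> j \<or> j \<le> k \<and> k \<le> i"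
    by linarith
  then show ?thesis using geo_btw[OF g] l btw_sym by metis
qed

lemma walk_edges_finite: "finite (walk_edges xs)"
proof -
  have "walk_edges xs = (\<lambda>i. {xs ! i, xs ! Suc i}) ` {i. Suc i < length xs}"
    unfolding walk_edges_def by blast
  moreover have "finite {i. Suc i < length xs}" by (rule finite_subset[of _ "{..<length xs}"]) auto
  ultimately show ?thesis by simp
qed

lemma walk_edges_idx: "e \<in> walk_edges xs \<Longrightarrow> \<exists>i. Suc i < length xs \<and> e = {xs ! i, xs ! Suc i}"
  unfolding walk_edges_def by blast

lemma walk_edges_vertex: "e \<in> walk_edges xs \<Longrightarrow> p \<in> e \<Longrightarrow> \<exists>m < length xs. xs ! m = p"
  unfolding walk_edges_def by (auto dest: Suc_lessD)

lemma step_unique: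
  assumes hB: "\<And>i j k. i \<le> j \<Longrightarrow> j \<le> k \<Longrightarrow> k < n \<Longrightarrow> Bt (g i) (g j) (g k)"
    and l: "Suc i < n" "Suc j < n"
    and ci: "g i \<in> {c, Suc c}" "g (Suc i) \<in> {c, Suc c}" "g i \<noteq> g (Suc i)"
    and cj: "g j \<in> {c, Suc c}" "g (Suc j) \<in> {c, Suc c}" "g j \<noteq> g (Suc j)"
  shows "i = j"
proof (rule ccontr)
  assume "i \<noteq> j"
  then consider "i < j" | "j < i" by linarith
  then show False
  proof cases
    case 1
    have "Bt (g i) (g (Suc i)) (g j)" "Bt (g i) (g j) (g (Suc j))" using hB 1 l by auto
    then show False using ci cj unfolding Bt_def by auto
  next
    case 2
    have "Bt (g j) (g (Suc j)) (g i)" "Bt (g j) (g i) (g (Suc i))" using hB 2 l by auto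
    then show False using ci cj unfolding Bt_def by auto
  qed
qed

lemma geo_hE_unique:
  assumes g: "geodesic (GV r s) GA xs" and e: "hE c y1 \<in> walk_edges xs" "hE c y2 \<in> walk_edges xs"
  shows "y1 = y2"
proof -
  obtain i where i: "Suc i < length xs" "hE c y1 = {xs ! i, xs ! Suc i}" using walk_edges_idx[OF e(1)] by blast
  obtain j where j: "Suc j < length xs" "hE c y2 = {xs ! j, xs ! Suc j}" using walk_edges_idx[OF e(2)] by blast
  have hB: "\<And>i j k. i \<le> j \<Longrightarrow> j \<le> k \<Longrightarrow> k < length xs \<Longrightarrow> Bt (fst (xs ! i)) (fst (xs ! j)) (fst (xs ! k))"
    using geo_btw[OF g] unfolding btw_def by blast
  have "xs ! i = (c,y1) \<and> xs ! Suc i = (Suc c,y1) \<or> xs ! i = (Suc c, y1) \<and> xs ! Suc i = (c,y1)"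
    using i(2) unfolding hE_def doubleton_eq_iff by metis
  then have ci: "fst (xs ! i) \<in> {c, Suc c}" "fst (xs ! Suc i) \<in> {c, Suc c}" "fst (xs ! i) \<noteq> fst (xs ! Suc i)"
    by auto
  have "xs ! j = (c,y2) \<and> xs ! Suc j = (Suc c,y2) \<or> xs ! j = (Suc c, y2) \<and> xs ! Suc j = (c,y2)"
    using j(2) unfolding hE_def doubleton_eq_iff by metis
  then have cj: "fst (xs ! j) \<in> {c, Suc c}" "fst (xs ! Suc j) \<in> {c, Suc c}" "fst (xs ! j) \<noteq> fst (xs ! Suc j)"
    by auto
  have "i = j" using step_unique[where g = "\<lambda>i. fst (xs ! i)", OF hB i(1) j(1) ci cj] by blast
  then have "hE c y1 = hE c y2" using i j by simp
  then show ?thesis by simp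
qed

lemma geo_vE_unique:
  assumes g: "geodesic (GV r s) GA xs" and e: "vE x1 c \<in> walk_edges xs" "vE x2 c \<in> walk_edges xs"
  shows "x1 = x2"
proof -
  obtain i where i: "Suc i < length xs" "vE x1 c = {xs ! i, xs ! Suc i}" using walk_edges_idx[OF e(1)] by blast
  obtain j where j: "Suc j < length xs" "vE x2 c = {xs ! j, xs ! Suc j}" using walk_edges_idx[OF e(2)] by blast
  have hB: "\<And>i j k. i \<le> j \<Longrightarrow> j \<le> k \<Longrightarrow> k < length xs \<Longrightarrow> Bt (snd (xs ! i)) (snd (xs ! j)) (snd (xs ! k))"
    using geo_btw[OF g] unfolding btw_def by blast
  have "xs ! i = (x1,c) \<and> xs ! Suc i = (x1,Suc c) \<or> xs ! i = (x1,Suc c) \<and> xs ! Suc i = (x1,c)"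
    using i(2) unfolding vE_def doubleton_eq_iff by metis
  then have ci: "snd (xs ! i) \<in> {c, Suc c}" "snd (xs ! Suc i) \<in> {c, Suc c}" "snd (xs ! i) \<noteq> snd (xs ! Suc i)"
    by auto
  have "xs ! j = (x2,c) \<and> xs ! Suc j = (x2,Suc c) \<or> xs ! j = (x2,Suc c) \<and> xs ! Suc j = (x2,c)"
    using j(2) unfolding vE_def doubleton_eq_iff by metis
  then have cj: "snd (xs ! j) \<in> {c, Suc c}" "snd (xs ! Suc j) \<in> {c, Suc c}" "snd (xs ! j) \<noteq> snd (xs ! Suc j)"
    by auto
  have "i = j" using step_unique[where g = "\<lambda>i. snd (xs ! i)", OF hB i(1) j(1) ci cj] by blast
  then have "vE x1 c = vE x2 c" using i j by simp
  then show ?thesis by simp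
qed

definition side :: "nat \<Rightarrow> nat \<Rightarrow> nat \<Rightarrow> nat \<times> nat \<Rightarrow> bool" where
  "side r s t p \<longleftrightarrow>
    (t = 0 \<and> fst p = 0 \<and> 1 \<le> snd p \<and> snd p \<le> s - 2) \<or>
    (t = 1 \<and> fst p = r - 1 \<and> 1 \<le> snd p \<and> snd p \<le> s - 2) \<or>
    (t = 2 \<and> snd p = 0 \<and> 1 \<le> fst p \<and> fst p \<le> r - 2) \<or>
    (t = 3 \<and> snd p = s - 1 \<and> 1 \<le> fst p \<and> fst p \<le> r - 2)"

lemma side_btw:
  assumes "3 \<le> r" "3 \<le> s" "side r s t1 a" "side r s t2 b" "side r s t3 c"
    "t1 \<noteq> t2" "t2 \<noteq> t3" "t1 \<noteq> t3"
  shows "\<not> btw a b c"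
  using assms unfolding side_def btw_def Bt_def by auto

lemma side_three:
  assumes "3 \<le> r" "3 \<le> s" and g: "geodesic (GV r s) GA xs"
    and m: "m1 < length xs" "m2 < length xs" "m3 < length xs"
    and sd: "side r s t1 (xs ! m1)" "side r s t2 (xs ! m2)" "side r s t3 (xs ! m3)"
    and d: "t1 \<noteq> t2" "t2 \<noteq> t3" "t1 \<noteq> t3"
  shows False
  using geo_mid[OF g m] side_btw[OF assms(1,2)] sd d by metis

definition T0 :: "nat \<Rightarrow> nat \<Rightarrow> (nat \<times> nat) set set" where "T0 r s = (\<lambda>y. hE 0 y) ` {1..s-2}"
definition T1 :: "nat \<Rightarrow> nat \<Rightarrow> (nat \<times> nat) set set" where "T1 r s = (\<lambda>y. hE (r-2) y) ` {1..s-2}"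
definition T2 :: "nat \<Rightarrow> nat \<Rightarrow> (nat \<times> nat) set set" where "T2 r s = (\<lambda>x. vE x 0) ` {1..r-2}"
definition T3 :: "nat \<Rightarrow> nat \<Rightarrow> (nat \<times> nat) set set" where "T3 r s = (\<lambda>x. vE x (s-2)) ` {1..r-2}"
definition S0 :: "nat \<Rightarrow> nat \<Rightarrow> (nat \<times> nat) set set" where "S0 r s = T0 r s \<union> T1 r s \<union> T2 r s \<union> T3 r s"

lemma T0_side: "3 \<le> r \<Longrightarrow> e \<in> T0 r s \<Longrightarrow> e \<in> walk_edges xs \<Longrightarrow> \<exists>m < length xs. side r s 0 (xs ! m)"
  unfolding T0_def hE_def side_def by (auto dest!: walk_edges_vertex[where p = "(0, _)"])
lemma T1_side: "3 \<le> r \<Longrightarrow> e \<in> T1 r s \<Longrightarrow> e \<in> walk_edges xs \<Longrightarrow> \<exists>m < length xs. side r s 1 (xs ! m)"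
proof -
  assume a: "3 \<le> r" "e \<in> T1 r s" "e \<in> walk_edges xs"
  then obtain y where y: "1 \<le> y" "y \<le> s - 2" "e = hE (r-2) y" unfolding T1_def by auto
  then have "(r-1, y) \<in> e" using a(1) unfolding hE_def by (simp add: Suc_diff_Suc numeral_2_eq_2)
  then obtain m where "m < length xs" "xs ! m = (r-1,y)" using walk_edges_vertex[OF a(3)] by blast
  then show ?thesis using y unfolding side_def by auto
qed
lemma T2_side: "3 \<le> s \<Longrightarrow> e \<in> T2 r s \<Longrightarrow> e \<in> walk_edges xs \<Longrightarrow> \<exists>m < length xs. side r s 2 (xs ! m)"
  unfolding T2_def vE_def side_def by (auto dest!: walk_edges_vertex[where p = "(_, 0)"])
lemma T3_side: "3 \<le> s \<Longrightarrow> e \<in> T3 r s \<Longrightarrow> e \<in> walk_edges xs \<Longrightarrow> \<exists>m < length xs. side r s 3 (xs ! m)"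
proof -
  assume a: "3 \<le> s" "e \<in> T3 r s" "e \<in> walk_edges xs"
  then obtain x where x: "1 \<le> x" "x \<le> r - 2" "e = vE x (s-2)" unfolding T3_def by auto
  then have "(x, s-1) \<in> e" using a(1) unfolding vE_def by (simp add: Suc_diff_Suc numeral_2_eq_2)
  then obtain m where "m < length xs" "xs ! m = (x, s-1)" using walk_edges_vertex[OF a(3)] by blast
  then show ?thesis using x unfolding side_def by auto
qed

lemma hE_in: "Suc k < r \<Longrightarrow> y < s \<Longrightarrow> hE k y \<in> graph_edges (GV r s) GA"
  unfolding graph_edges_def hE_def
  by (rule CollectI, rule exI[of _ "(k,y)"], rule exI[of _ "(Suc k,y)"]) (simp add: GV_iff GA_iff md_def nd_def)
lemma vE_in: "x < r \<Longrightarrow> Suc k < s \<Longrightarrow> vE x k \<in> graph_edges (GV r s) GA"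
  unfolding graph_edges_def vE_def
  by (rule CollectI, rule exI[of _ "(x,k)"], rule exI[of _ "(x,Suc k)"]) (simp add: GV_iff GA_iff md_def nd_def)

lemma graph_edges_cases:
  assumes "e \<in> graph_edges (GV r s) GA"
  shows "(\<exists>k y. e = hE k y \<and> Suc k < r \<and> y < s) \<or> (\<exists>x k. e = vE x k \<and> x < r \<and> Suc k < s)"
proof -
  obtain u v where uv: "e = {u,v}" "u \<in> GV r s" "v \<in> GV r s" "GA u v"
    using assms unfolding graph_edges_def by blast
  obtain a b c d where u: "u = (a,b)" and v: "v = (c,d)" by (cases u; cases v)
  have "(nd a c = 1 \<and> nd b d = 0) \<or> (nd a c = 0 \<and> nd b d = 1)"
    using uv(4) u v unfolding GA_iff md_def by auto
  then consider "Suc a = c" "b = d" | "Suc c = a" "b = d" | "a = c" "Suc b = d" | "a = c" "Suc d = b"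
    unfolding nd_0 nd_1 by auto
  then show ?thesis
  proof cases
    case 1 then show ?thesis using uv u v unfolding hE_def by (auto simp: GV_iff)
  next
    case 2 then have "e = hE c d" using uv u v unfolding hE_def by auto
    then show ?thesis using uv u v 2 by (auto simp: GV_iff)
  next
    case 3 then show ?thesis using uv u v unfolding vE_def by (auto simp: GV_iff)
  next
    case 4 then have "e = vE c d" using uv u v unfolding vE_def by auto
    then show ?thesis using uv u v 4 by (auto simp: GV_iff)
  qed
qed

lemma graph_edges_finite: "finite (graph_edges (GV r s) GA)"
proof -
  have "graph_edges (GV r s) GA \<subseteq> (\<lambda>(u,v). {u,v}) ` (GV r s \<times> GV r s)"
    unfolding graph_edges_def by auto
  moreover have "finite (GV r s)" unfolding cart_V_def path_V_def by simp
  ultimately show ?thesis by (meson finite_SigmaI finite_imageI finite_subset)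
qed

lemma S0_sub: "3 \<le> r \<Longrightarrow> 3 \<le> s \<Longrightarrow> S0 r s \<subseteq> graph_edges (GV r s) GA"
  unfolding S0_def T0_def T1_def T2_def T3_def by (auto intro!: hE_in vE_in)

lemma card_le1I: "finite A \<Longrightarrow> (\<And>a b. a \<in> A \<Longrightarrow> b \<in> A \<Longrightarrow> a = b) \<Longrightarrow> card A \<le> 1"
  using card_le_Suc0_iff_eq by (metis One_nat_def)

lemma card_img_le1:
  assumes "finite W" "\<And>y1 y2. f y1 \<in> W \<Longrightarrow> f y2 \<in> W \<Longrightarrow> y1 = y2"
  shows "card (f ` A \<inter> W) \<le> 1"
proof (rule card_le1I)
  show "finite (f ` A \<inter> W)" using assms(1) by simp
  fix a b assume "a \<in> f ` A \<inter> W" "b \<in> f ` A \<inter> W"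
  then obtain y1 y2 where "a = f y1" "b = f y2" "f y1 \<in> W" "f y2 \<in> W" by blast
  then show "a = b" using assms(2) by blast
qed

lemma card_Un4: "card (A \<union> B \<union> C \<union> D) \<le> card A + card B + card C + card D"
proof -
  have "card (A \<union> B \<union> C \<union> D) \<le> card (A \<union> B \<union> C) + card D" by (rule card_Un_le)
  moreover have "card (A \<union> B \<union> C) \<le> card (A \<union> B) + card C" by (rule card_Un_le)
  moreover have "card (A \<union> B) \<le> card A + card B" by (rule card_Un_le)
  ultimately show ?thesis by linarith
qed

lemma S0_gp_card:
  assumes r: "3 \<le> r" and s: "3 \<le> s" and g: "geodesic (GV r s) GA xs"
  shows "card (S0 r s \<inter> walk_edges xs) < 3"
proof -
  let ?W = "walk_edges xs"
  have fW: "finite ?W" by (rule walk_edges_finite)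
  have c0: "card (T0 r s \<inter> ?W) \<le> 1" unfolding T0_def
    by (rule card_img_le1[OF fW]) (rule geo_hE_unique[OF g])
  have c1: "card (T1 r s \<inter> ?W) \<le> 1" unfolding T1_def
    by (rule card_img_le1[OF fW]) (rule geo_hE_unique[OF g])
  have c2: "card (T2 r s \<inter> ?W) \<le> 1" unfolding T2_def
    by (rule card_img_le1[OF fW]) (rule geo_vE_unique[OF g])
  have c3: "card (T3 r s \<inter> ?W) \<le> 1" unfolding T3_def
    by (rule card_img_le1[OF fW]) (rule geo_vE_unique[OF g])
  have ne: "A \<inter> ?W \<noteq> {}" if "card (A \<inter> ?W) \<noteq> 0" for A using that by auto
  have n0: "\<exists>m < length xs. side r s 0 (xs ! m)" if "card (T0 r s \<inter> ?W) \<noteq> 0"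
    using ne[OF that] T0_side[OF r, of _ s xs] by blast
  have n1: "\<exists>m < length xs. side r s 1 (xs ! m)" if "card (T1 r s \<inter> ?W) \<noteq> 0"
    using ne[OF that] T1_side[OF r, of _ s xs] by blast
  have n2: "\<exists>m < length xs. side r s 2 (xs ! m)" if "card (T2 r s \<inter> ?W) \<noteq> 0"
    using ne[OF that] T2_side[OF s, of _ r xs] by blast
  have n3: "\<exists>m < length xs. side r s 3 (xs ! m)" if "card (T3 r s \<inter> ?W) \<noteq> 0"
    using ne[OF that] T3_side[OF s, of _ r xs] by blast
  have three: "False" if a: "\<exists>m < length xs. side r s t1 (xs ! m)" and b: "\<exists>m < length xs. side r s t2 (xs ! m)"
     and c: "\<exists>m < length xs. side r s t3 (xs ! m)" and d: "t1 \<noteq> t2" "t2 \<noteq> t3" "t1 \<noteq> t3" for t1 t2 t3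
  proof -
    obtain m1 m2 m3 where "m1 < length xs" "m2 < length xs" "m3 < length xs"
      "side r s t1 (xs ! m1)" "side r s t2 (xs ! m2)" "side r s t3 (xs ! m3)" using a b c by blast
    from side_three[OF r s g this d] show False .
  qed
  have "S0 r s \<inter> ?W = (T0 r s \<inter> ?W) \<union> (T1 r s \<inter> ?W) \<union> (T2 r s \<inter> ?W) \<union> (T3 r s \<inter> ?W)"
    unfolding S0_def by blast
  then have "card (S0 r s \<inter> ?W) \<le> card (T0 r s \<inter> ?W) + card (T1 r s \<inter> ?W) + card (T2 r s \<inter> ?W) + card (T3 r s \<inter> ?W)"
    using card_Un4 by metis
  moreover have "\<not> (card (T0 r s \<inter> ?W) \<noteq> 0 \<and> card (T1 r s \<inter> ?W) \<noteq> 0 \<and> card (T2 r s \<inter> ?W) \<noteq> 0)"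
    using three n0 n1 n2 by force
  moreover have "\<not> (card (T0 r s \<inter> ?W) \<noteq> 0 \<and> card (T1 r s \<inter> ?W) \<noteq> 0 \<and> card (T3 r s \<inter> ?W) \<noteq> 0)"
    using three n0 n1 n3 by force
  moreover have "\<not> (card (T0 r s \<inter> ?W) \<noteq> 0 \<and> card (T2 r s \<inter> ?W) \<noteq> 0 \<and> card (T3 r s \<inter> ?W) \<noteq> 0)"
    using three n0 n2 n3 by force
  moreover have "\<not> (card (T1 r s \<inter> ?W) \<noteq> 0 \<and> card (T2 r s \<inter> ?W) \<noteq> 0 \<and> card (T3 r s \<inter> ?W) \<noteq> 0)"
    using three n1 n2 n3 by force
  ultimately show ?thesis using c0 c1 c2 c3 by linarith
qed

lemma S0_gp: "3 \<le> r \<Longrightarrow> 3 \<le> s \<Longrightarrow> edge_gp_set (GV r s) GA (S0 r s)"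
  unfolding edge_gp_set_def using S0_sub S0_gp_card by blast

lemma S0_card:
  assumes r: "3 \<le> r" and s: "3 \<le> s"
  shows "card (S0 r s) = 2 * (s - 2) + 2 * (r - 2)"
proof -
  have a: "card (T0 r s) = s - 2" unfolding T0_def by (subst card_image) (auto simp: inj_on_def)
  have b: "card (T1 r s) = s - 2" unfolding T1_def by (subst card_image) (auto simp: inj_on_def)
  have c: "card (T2 r s) = r - 2" unfolding T2_def by (subst card_image) (auto simp: inj_on_def)
  have d: "card (T3 r s) = r - 2" unfolding T3_def by (subst card_image) (auto simp: inj_on_def)
  have f: "finite (T0 r s)" "finite (T1 r s)" "finite (T2 r s)" "finite (T3 r s)"
    unfolding T0_def T1_def T2_def T3_def by auto
  have d1: "T0 r s \<inter> T1 r s = {}" using r unfolding T0_def T1_def by auto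
  have d2: "(T0 r s \<union> T1 r s) \<inter> T2 r s = {}" unfolding T0_def T1_def T2_def by auto
  have d3: "(T0 r s \<union> T1 r s \<union> T2 r s) \<inter> T3 r s = {}" using s unfolding T0_def T1_def T2_def T3_def by auto
  show ?thesis unfolding S0_def
    using a b c d f d1 d2 d3 by (simp add: card_Un_disjoint)
qed

lemma seg_CL1: "a \<le> b \<Longrightarrow> CL x a b \<subseteq> seg (x,a) (x,b)" unfolding seg_def by auto
lemma seg_CL2: "a \<le> b \<Longrightarrow> CL x a b \<subseteq> seg (x,b) (x,a)" unfolding seg_def by auto
lemma seg_RW1: "a \<le> b \<Longrightarrow> RW y a b \<subseteq> seg (a,y) (b,y)" unfolding seg_def by auto
lemma seg_RW2: "a \<le> b \<Longrightarrow> RW y a b \<subseteq> seg (b,y) (a,y)" unfolding seg_def by auto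

lemma geo2:
  assumes "p \<in> GV r s" "q \<in> GV r s" "w \<in> GV r s"
    "fst p = fst q \<or> snd p = snd q" "fst q = fst w \<or> snd q = snd w"
    "md p w = md p q + md q w"
  shows "\<exists>xs. geodesic (GV r s) GA xs \<and> seg p q \<union> seg q w \<subseteq> walk_edges xs"
proof -
  have "gw r s p w (md p w) (seg p q \<union> seg q w)"
    using gw_cat[OF gw_line[OF assms(1,2,4)] gw_line[OF assms(2,3,5)]] assms(6) by simp
  then show ?thesis by (rule gw_geo)
qed

lemma geo3:
  assumes "p \<in> GV r s" "q \<in> GV r s" "w \<in> GV r s" "z \<in> GV r s"
    "fst p = fst q \<or> snd p = snd q" "fst q = fst w \<or> snd q = snd w" "fst w = fst z \<or> snd w = snd z"
    "md p z = md p q + md q w + md w z"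
  shows "\<exists>xs. geodesic (GV r s) GA xs \<and> seg p q \<union> seg q w \<union> seg w z \<subseteq> walk_edges xs"
proof -
  have "gw r s p z (md p z) (seg p q \<union> seg q w \<union> seg w z)"
    using gw_cat[OF gw_cat[OF gw_line[OF assms(1,2,5)] gw_line[OF assms(2,3,6)]] gw_line[OF assms(3,4,7)]] assms(8)
    by simp
  then show ?thesis by (rule gw_geo)
qed

lemma gp_le2: "edge_gp_set V E S \<Longrightarrow> geodesic V E xs \<Longrightarrow> card (S \<inter> walk_edges xs) \<le> 2"
  unfolding edge_gp_set_def by fastforce

lemma card3:
  assumes "finite S" "X \<inter> Y = {}" "X \<inter> Z = {}" "Y \<inter> Z = {}" "X \<union> Y \<union> Z \<subseteq> W" "card (S \<inter> W) \<le> 2"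
    "finite W"
  shows "card (S \<inter> X) + card (S \<inter> Y) + card (S \<inter> Z) \<le> 2"
proof -
  have f: "finite (S \<inter> X)" "finite (S \<inter> Y)" "finite (S \<inter> Z)" using assms(1) by auto
  have d1: "(S \<inter> X) \<inter> (S \<inter> Y) = {}" using assms(2) by blast
  have d2: "((S \<inter> X) \<union> (S \<inter> Y)) \<inter> (S \<inter> Z) = {}" using assms(3,4) by blast
  have "card (S \<inter> X) + card (S \<inter> Y) + card (S \<inter> Z) = card ((S \<inter> X) \<union> (S \<inter> Y) \<union> (S \<inter> Z))"
    using f d1 d2 by (simp add: card_Un_disjoint)
  also have "\<dots> \<le> card (S \<inter> W)" using assms(5,7) by (intro card_mono) auto
  finally show ?thesis using assms(6) by simp
qed

lemma three_le:
  assumes "finite W" "card (S \<inter> W) \<le> 2" "e1 \<in> S" "e2 \<in> S" "e3 \<in> S" "e1 \<in> W" "e2 \<in> W" "e3 \<in> W"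
    "e1 \<noteq> e2" "e1 \<noteq> e3" "e2 \<noteq> e3"
  shows False
proof -
  have "card {e1,e2,e3} \<le> card (S \<inter> W)" using assms by (intro card_mono) auto
  then show False using assms by simp
qed

lemma CL_split: "a \<le> b \<Longrightarrow> b \<le> c \<Longrightarrow> CL x a c = CL x a b \<union> CL x b c"
  unfolding CL_def by auto
lemma RW_split: "a \<le> b \<Longrightarrow> b \<le> c \<Longrightarrow> RW y a c = RW y a b \<union> RW y b c"
  unfolding RW_def by auto
lemma CL_RW_disj[simp]: "CL x a b \<inter> RW y c d = {}" "RW y c d \<inter> CL x a b = {}" by auto
lemma CL_disj1: "b \<le> c \<Longrightarrow> CL x a b \<inter> CL x c d = {}" by auto
lemma CL_disj2: "x \<noteq> x' \<Longrightarrow> CL x a b \<inter> CL x' c d = {}" by auto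
lemma RW_disj1: "b \<le> c \<Longrightarrow> RW y a b \<inter> RW y c d = {}" by auto
lemma RW_disj2: "y \<noteq> y' \<Longrightarrow> RW y a b \<inter> RW y' c d = {}" by auto

lemma card_split:
  assumes "finite S" "A = B \<union> C" "B \<inter> C = {}"
  shows "card (S \<inter> A) = card (S \<inter> B) + card (S \<inter> C)"
proof -
  have "S \<inter> A = (S \<inter> B) \<union> (S \<inter> C)" using assms(2) by blast
  moreover have "(S \<inter> B) \<inter> (S \<inter> C) = {}" using assms(3) by blast
  ultimately show ?thesis using assms(1) by (simp add: card_Un_disjoint)
qed

lemma gp_finite: "edge_gp_set (GV r s) GA S \<Longrightarrow> finite S"
  using graph_edges_finite unfolding edge_gp_set_def by (meson finite_subset)

lemma row_ineq:
  assumes r: "5 \<le> r" and s: "5 \<le> s" and gp: "edge_gp_set (GV r s) GA S" and y: "y < s"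
  shows "2 * card (S \<inter> RW y 0 (r-1)) + card (S \<inter> CL 0 0 (s-1)) + card (S \<inter> CL (r-1) 0 (s-1)) \<le> 4"
proof -
  have fS: "finite S" using gp by (rule gp_finite)
  have yy: "y \<le> s - 1" using y by simp
  have "\<exists>xs. geodesic (GV r s) GA xs \<and>
    seg (0,0) (0,y) \<union> seg (0,y) (r-1,y) \<union> seg (r-1,y) (r-1,s-1) \<subseteq> walk_edges xs"
    using r s y by (intro geo3) (simp_all add: GV_iff md_def nd_def)
  then obtain xs where xs: "geodesic (GV r s) GA xs"
    "seg (0,0) (0,y) \<union> seg (0,y) (r-1,y) \<union> seg (r-1,y) (r-1,s-1) \<subseteq> walk_edges xs" by blast
  have 1: "card (S \<inter> CL 0 0 y) + card (S \<inter> RW y 0 (r-1)) + card (S \<inter> CL (r-1) y (s-1)) \<le> 2"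
  proof (rule card3[OF fS _ _ _ _ gp_le2[OF gp xs(1)] walk_edges_finite])
    show "CL 0 0 y \<union> RW y 0 (r - 1) \<union> CL (r - 1) y (s - 1) \<subseteq> walk_edges xs"
      using xs(2) seg_CL1[OF le0, of 0 y] seg_RW1[OF le0, of y "r-1"] seg_CL1[OF yy, of "r-1"] by blast
    show "CL 0 0 y \<inter> CL (r - 1) y (s - 1) = {}" using r by (intro CL_disj2) simp
  qed auto
  have "\<exists>xs. geodesic (GV r s) GA xs \<and>
    seg (0,s-1) (0,y) \<union> seg (0,y) (r-1,y) \<union> seg (r-1,y) (r-1,0) \<subseteq> walk_edges xs"
    using r s y by (intro geo3) (simp_all add: GV_iff md_def nd_def)
  then obtain ys where ys: "geodesic (GV r s) GA ys"
    "seg (0,s-1) (0,y) \<union> seg (0,y) (r-1,y) \<union> seg (r-1,y) (r-1,0) \<subseteq> walk_edges ys" by blast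
  have 2: "card (S \<inter> CL 0 y (s-1)) + card (S \<inter> RW y 0 (r-1)) + card (S \<inter> CL (r-1) 0 y) \<le> 2"
  proof (rule card3[OF fS _ _ _ _ gp_le2[OF gp ys(1)] walk_edges_finite])
    show "CL 0 y (s-1) \<union> RW y 0 (r - 1) \<union> CL (r - 1) 0 y \<subseteq> walk_edges ys"
      using ys(2) seg_CL2[OF yy, of 0] seg_RW1[OF le0, of y "r-1"] seg_CL2[OF le0, of "r-1" y] by blast
    show "CL 0 y (s-1) \<inter> CL (r - 1) 0 y = {}" using r by (intro CL_disj2) simp
  qed auto
  have 3: "card (S \<inter> CL 0 0 (s-1)) = card (S \<inter> CL 0 0 y) + card (S \<inter> CL 0 y (s-1))"
    using y by (intro card_split[OF fS CL_split CL_disj1]) auto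
  have 4: "card (S \<inter> CL (r-1) 0 (s-1)) = card (S \<inter> CL (r-1) 0 y) + card (S \<inter> CL (r-1) y (s-1))"
    using y by (intro card_split[OF fS CL_split CL_disj1]) auto
  show ?thesis using 1 2 3 4 by linarith
qed

lemma col_ineq:
  assumes r: "5 \<le> r" and s: "5 \<le> s" and gp: "edge_gp_set (GV r s) GA S" and x: "x < r"
  shows "2 * card (S \<inter> CL x 0 (s-1)) + card (S \<inter> RW 0 0 (r-1)) + card (S \<inter> RW (s-1) 0 (r-1)) \<le> 4"
proof -
  have fS: "finite S" using gp by (rule gp_finite)
  have xx: "x \<le> r - 1" using x by simp
  have "\<exists>xs. geodesic (GV r s) GA xs \<and>
    seg (0,0) (x,0) \<union> seg (x,0) (x,s-1) \<union> seg (x,s-1) (r-1,s-1) \<subseteq> walk_edges xs"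
    using r s x by (intro geo3) (simp_all add: GV_iff md_def nd_def)
  then obtain xs where xs: "geodesic (GV r s) GA xs"
    "seg (0,0) (x,0) \<union> seg (x,0) (x,s-1) \<union> seg (x,s-1) (r-1,s-1) \<subseteq> walk_edges xs" by blast
  have 1: "card (S \<inter> RW 0 0 x) + card (S \<inter> CL x 0 (s-1)) + card (S \<inter> RW (s-1) x (r-1)) \<le> 2"
  proof (rule card3[OF fS _ _ _ _ gp_le2[OF gp xs(1)] walk_edges_finite])
    show "RW 0 0 x \<union> CL x 0 (s-1) \<union> RW (s-1) x (r-1) \<subseteq> walk_edges xs"
      using xs(2) seg_RW1[where a=0 and b=x and y=0, OF le0] seg_CL1[where a=0 and b="s-1" and x=x, OF le0]
        seg_RW1[where a=x and b="r-1" and y="s-1", OF xx] by blast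
    show "RW 0 0 x \<inter> RW (s-1) x (r-1) = {}" using s by (intro RW_disj2) simp
  qed auto
  have "\<exists>xs. geodesic (GV r s) GA xs \<and>
    seg (0,s-1) (x,s-1) \<union> seg (x,s-1) (x,0) \<union> seg (x,0) (r-1,0) \<subseteq> walk_edges xs"
    using r s x by (intro geo3) (simp_all add: GV_iff md_def nd_def)
  then obtain ys where ys: "geodesic (GV r s) GA ys"
    "seg (0,s-1) (x,s-1) \<union> seg (x,s-1) (x,0) \<union> seg (x,0) (r-1,0) \<subseteq> walk_edges ys" by blast
  have 2: "card (S \<inter> RW (s-1) 0 x) + card (S \<inter> CL x 0 (s-1)) + card (S \<inter> RW 0 x (r-1)) \<le> 2"
  proof (rule card3[OF fS _ _ _ _ gp_le2[OF gp ys(1)] walk_edges_finite])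
    show "RW (s-1) 0 x \<union> CL x 0 (s-1) \<union> RW 0 x (r-1) \<subseteq> walk_edges ys"
      using ys(2) seg_RW1[where a=0 and b=x and y="s-1", OF le0] seg_CL2[where a=0 and b="s-1" and x=x, OF le0]
        seg_RW1[where a=x and b="r-1" and y=0, OF xx] by blast
    show "RW (s-1) 0 x \<inter> RW 0 x (r-1) = {}" using s by (intro RW_disj2) simp
  qed auto
  have 3: "card (S \<inter> RW 0 0 (r-1)) = card (S \<inter> RW 0 0 x) + card (S \<inter> RW 0 x (r-1))"
    using x by (intro card_split[OF fS RW_split RW_disj1]) auto
  have 4: "card (S \<inter> RW (s-1) 0 (r-1)) = card (S \<inter> RW (s-1) 0 x) + card (S \<inter> RW (s-1) x (r-1))"
    using x by (intro card_split[OF fS RW_split RW_disj1]) auto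
  show ?thesis using 1 2 3 4 by linarith
qed

lemma gp_cover:
  assumes "edge_gp_set (GV r s) GA S"
  shows "S \<subseteq> (\<Union>y<s. RW y 0 (r-1)) \<union> (\<Union>x<r. CL x 0 (s-1))"
proof
  fix e assume "e \<in> S"
  then have "e \<in> graph_edges (GV r s) GA" using assms unfolding edge_gp_set_def by blast
  then consider k y where "e = hE k y" "Suc k < r" "y < s" | x k where "e = vE x k" "x < r" "Suc k < s"
    using graph_edges_cases by blast
  then show "e \<in> (\<Union>y<s. RW y 0 (r-1)) \<union> (\<Union>x<r. CL x 0 (s-1))"
  proof cases
    case 1 then show ?thesis by auto
  next
    case 2 then show ?thesis by auto
  qed
qed

lemma card_cover:
  assumes "edge_gp_set (GV r s) GA S"
  shows "card S \<le> (\<Sum>y<s. card (S \<inter> RW y 0 (r-1))) + (\<Sum>x<r. card (S \<inter> CL x 0 (s-1)))"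
proof -
  have "S = (\<Union>y<s. S \<inter> RW y 0 (r-1)) \<union> (\<Union>x<r. S \<inter> CL x 0 (s-1))"
    using gp_cover[OF assms] by blast
  then have "card S \<le> card (\<Union>y<s. S \<inter> RW y 0 (r-1)) + card (\<Union>x<r. S \<inter> CL x 0 (s-1))"
    by (metis card_Un_le)
  also have "\<dots> \<le> (\<Sum>y<s. card (S \<inter> RW y 0 (r-1))) + (\<Sum>x<r. card (S \<inter> CL x 0 (s-1)))"
    by (intro add_mono card_UN_le) auto
  finally show ?thesis .
qed

lemma sum_split_ends:
  assumes "2 \<le> (n::nat)"
  shows "sum f {..<n} = f 0 + f (n-1) + sum f {1..n-2}"
proof -
  have "{..<n} = insert 0 (insert (n-1) {1..n-2})" using assms by auto
  moreover have "0 \<notin> insert (n-1) {1..n-2}" "n - 1 \<notin> {1..n-2}" using assms by auto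
  ultimately show ?thesis by (simp add: add.assoc)
qed

lemma sum_eq_const:
  assumes "finite I" "\<And>i. i \<in> I \<Longrightarrow> f i \<le> (c::nat)" "sum f I = c * card I" "i \<in> I"
  shows "f i = c"
proof (rule ccontr)
  assume "f i \<noteq> c"
  then have "f i < c" using assms(2,4) by (simp add: order_less_le)
  then have "sum f I < sum (\<lambda>_. c) I" using assms by (intro sum_strict_mono_ex1) auto
  then show False using assms(3) by simp
qed

lemma main_bound:
  assumes r: "5 \<le> r" and s: "5 \<le> s" and gp: "edge_gp_set (GV r s) GA S"
  defines "a \<equiv> \<lambda>y. card (S \<inter> RW y 0 (r-1))" and "b \<equiv> \<lambda>x. card (S \<inter> CL x 0 (s-1))"
  shows "card S \<le> 2 * (s - 2) + 2 * (r - 2)"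
    and "card S = 2 * (s - 2) + 2 * (r - 2) \<Longrightarrow>
      a 0 = 0 \<and> a (s-1) = 0 \<and> b 0 = 0 \<and> b (r-1) = 0 \<and> (\<forall>y\<in>{1..s-2}. a y = 2) \<and> (\<forall>x\<in>{1..r-2}. b x = 2)"
proof -
  let ?I = "{1..s-2}" and ?J = "{1..r-2}"
  define L where "L = b 0 + b (r-1)"
  define T where "T = a 0 + a (s-1)"
  define A where "A = sum a ?I"
  define B where "B = sum b ?J"
  have ri: "2 * a y + L \<le> 4" if "y < s" for y
    using row_ineq[OF r s gp that] unfolding a_def b_def L_def by simp
  have ci: "2 * b x + T \<le> 4" if "x < r" for x
    using col_ineq[OF r s gp that] unfolding a_def b_def T_def by simp
  have "(\<Sum>y\<in>?I. 2 * a y + L) \<le> (\<Sum>y\<in>?I. 4)" using ri s by (intro sum_mono) auto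
  then have RA: "2 * A + (s-2) * L \<le> 4 * (s-2)" unfolding A_def by (simp add: sum.distrib sum_distrib_left)
  have "(\<Sum>x\<in>?J. 2 * b x + T) \<le> (\<Sum>x\<in>?J. 4)" using ci r by (intro sum_mono) auto
  then have CB: "2 * B + (r-2) * T \<le> 4 * (r-2)" unfolding B_def by (simp add: sum.distrib sum_distrib_left)
  have cS: "card S \<le> A + B + L + T"
    using card_cover[OF gp] sum_split_ends[of s a] sum_split_ends[of r b] r s
    unfolding A_def B_def L_def T_def a_def b_def by simp
  have m1: "3 * L \<le> (s-2) * L" using s by (intro mult_le_mono1) simp
  have m2: "3 * T \<le> (r-2) * T" using r by (intro mult_le_mono1) simp
  show "card S \<le> 2 * (s - 2) + 2 * (r - 2)" using RA CB cS m1 m2 by linarith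
  assume eq: "card S = 2 * (s - 2) + 2 * (r - 2)"
  have LT: "L = 0" "T = 0" using RA CB cS m1 m2 eq by linarith+
  have AB: "A = 2 * (s-2)" "B = 2 * (r-2)" using RA CB cS m1 m2 eq LT by linarith+
  have "\<forall>y\<in>?I. a y = 2"
  proof
    fix y assume y: "y \<in> ?I"
    show "a y = 2"
    proof (rule sum_eq_const[of ?I a 2 y])
      fix i assume "i \<in> ?I"
      then have "i < s" using s by auto
      then show "a i \<le> 2" using ri[of i] by linarith
    next
      show "sum a ?I = 2 * card ?I" using AB unfolding A_def by simp
    qed (use y in auto)
  qed
  moreover have "\<forall>x\<in>?J. b x = 2"
  proof
    fix x assume x: "x \<in> ?J"
    show "b x = 2"
    proof (rule sum_eq_const[of ?J b 2 x])
      fix i assume "i \<in> ?J"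
      then have "i < r" using r by auto
      then show "b i \<le> 2" using ci[of i] by linarith
    next
      show "sum b ?J = 2 * card ?J" using AB unfolding B_def by simp
    qed (use x in auto)
  qed
  ultimately show "a 0 = 0 \<and> a (s-1) = 0 \<and> b 0 = 0 \<and> b (r-1) = 0 \<and> (\<forall>y\<in>?I. a y = 2) \<and> (\<forall>x\<in>?J. b x = 2)"
    using LT unfolding L_def T_def by simp
qed

lemma no3:
  assumes gp: "edge_gp_set (GV r s) GA S" and g: "geodesic (GV r s) GA xs"
    and "e1 \<in> S" "e2 \<in> S" "e3 \<in> S" "e1 \<in> walk_edges xs" "e2 \<in> walk_edges xs" "e3 \<in> walk_edges xs"
    "e1 \<noteq> e2" "e1 \<noteq> e3" "e2 \<noteq> e3"
  shows False
  by (rule three_le[OF walk_edges_finite gp_le2[OF gp g] assms(3-)])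

lemma card2_other:
  assumes "card R = 2" "e \<in> R"
  shows "\<exists>e'\<in>R. e' \<noteq> e"
proof (rule ccontr)
  assume "\<not> ?thesis"
  then have "R \<subseteq> {e}" by blast
  moreover have "finite R" using assms(1) card_ge_0_finite[of R] by simp
  ultimately have "card R \<le> card {e}" by (intro card_mono) auto
  then have "card R \<le> 1" by simp
  then show False using assms by simp
qed

lemma row_unique:
  assumes r: "5 \<le> r" and s: "5 \<le> s" and gp: "edge_gp_set (GV r s) GA S"
    and y: "1 \<le> y" "y \<le> s - 2" and c2: "card (S \<inter> RW y 0 (r-1)) = 2"
    and cols: "\<And>x. 1 \<le> x \<Longrightarrow> x \<le> r - 2 \<Longrightarrow> S \<inter> CL x 0 (s-1) \<noteq> {}"
  shows "S \<inter> RW y 0 (r-1) = {hE 0 y, hE (r-2) y}"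
proof -
  have fS: "finite S" using gp by (rule gp_finite)
  have ys1: "y \<le> s - 1" using y by simp
  have sub: "S \<inter> RW y 0 (r-1) \<subseteq> {hE 0 y, hE (r-2) y}"
  proof
    fix e assume e: "e \<in> S \<inter> RW y 0 (r-1)"
    then obtain k where k: "e = hE k y" "k < r - 1" "e \<in> S" by auto
    obtain e' where e': "e' \<in> S \<inter> RW y 0 (r-1)" "e' \<noteq> e" using card2_other[OF c2 e] by blast
    then obtain k' where k': "e' = hE k' y" "k' < r - 1" "e' \<in> S" "k' \<noteq> k" using k by auto
    consider "k' < k" | "k < k'" using k'(4) by linarith
    then show "e \<in> {hE 0 y, hE (r-2) y}"
    proof cases
      case 1
      have "k = r - 2"
      proof (rule ccontr)
        assume "k \<noteq> r - 2"
        then have kk: "1 \<le> Suc k" "Suc k \<le> r - 2" using k by auto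
        obtain f where f: "f \<in> S" "f \<in> CL (Suc k) 0 (s-1)" using cols[OF kk] by blast
        then obtain c where c: "f = vE (Suc k) c" "c < s - 1" by auto
        show False
        proof (cases "y \<le> c")
          case True
          have "\<exists>xs. geodesic (GV r s) GA xs \<and> seg (0,y) (Suc k,y) \<union> seg (Suc k,y) (Suc k,s-1) \<subseteq> walk_edges xs"
            using r s y kk by (intro geo2) (auto simp: GV_iff md_def nd_def)
          then obtain xs where xs: "geodesic (GV r s) GA xs"
            "seg (0,y) (Suc k,y) \<union> seg (Suc k,y) (Suc k,s-1) \<subseteq> walk_edges xs" by blast
          have mem: "e \<in> RW y 0 (Suc k)" "e' \<in> RW y 0 (Suc k)" "f \<in> CL (Suc k) y (s-1)"
            using k(1,2) k'(1,2) c 1 True by auto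
          have "RW y 0 (Suc k) \<subseteq> walk_edges xs" using xs(2) seg_RW1[where a=0 and b="Suc k" and y=y, OF le0] by blast
          moreover have "CL (Suc k) y (s-1) \<subseteq> walk_edges xs"
            using xs(2) seg_CL1[where a=y and b="s-1" and x="Suc k", OF ys1] by blast
          ultimately have w: "e \<in> walk_edges xs" "e' \<in> walk_edges xs" "f \<in> walk_edges xs"
            using mem by blast+
          have n: "e \<noteq> e'" "e \<noteq> f" "e' \<noteq> f" using e'(2) k(1) k'(1) c(1) by auto
          show False by (rule no3[OF gp xs(1) k(3) k'(3) f(1) w n])
        next
          case False
          have "\<exists>xs. geodesic (GV r s) GA xs \<and> seg (0,y) (Suc k,y) \<union> seg (Suc k,y) (Suc k,0) \<subseteq> walk_edges xs"
            using r s y kk by (intro geo2) (auto simp: GV_iff md_def nd_def)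
          then obtain xs where xs: "geodesic (GV r s) GA xs"
            "seg (0,y) (Suc k,y) \<union> seg (Suc k,y) (Suc k,0) \<subseteq> walk_edges xs" by blast
          have mem: "e \<in> RW y 0 (Suc k)" "e' \<in> RW y 0 (Suc k)" "f \<in> CL (Suc k) 0 y"
            using k(1,2) k'(1,2) c 1 False by auto
          have "RW y 0 (Suc k) \<subseteq> walk_edges xs" using xs(2) seg_RW1[where a=0 and b="Suc k" and y=y, OF le0] by blast
          moreover have "CL (Suc k) 0 y \<subseteq> walk_edges xs"
            using xs(2) seg_CL2[where a=0 and b=y and x="Suc k", OF le0] by blast
          ultimately have w: "e \<in> walk_edges xs" "e' \<in> walk_edges xs" "f \<in> walk_edges xs"
            using mem by blast+
          have n: "e \<noteq> e'" "e \<noteq> f" "e' \<noteq> f" using e'(2) k(1) k'(1) c(1) by auto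
          show False by (rule no3[OF gp xs(1) k(3) k'(3) f(1) w n])
        qed
      qed
      then show ?thesis using k by simp
    next
      case 2
      have "k = 0"
      proof (rule ccontr)
        assume "k \<noteq> 0"
        then have kk: "1 \<le> k" "k \<le> r - 2" using k' 2 by auto
        have kr: "k \<le> r - 1" using kk by simp
        obtain f where f: "f \<in> S" "f \<in> CL k 0 (s-1)" using cols[OF kk] by blast
        then obtain c where c: "f = vE k c" "c < s - 1" by auto
        show False
        proof (cases "y \<le> c")
          case True
          have "\<exists>xs. geodesic (GV r s) GA xs \<and> seg (r-1,y) (k,y) \<union> seg (k,y) (k,s-1) \<subseteq> walk_edges xs"
            using r s y kk by (intro geo2) (auto simp: GV_iff md_def nd_def)
          then obtain xs where xs: "geodesic (GV r s) GA xs"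
            "seg (r-1,y) (k,y) \<union> seg (k,y) (k,s-1) \<subseteq> walk_edges xs" by blast
          have mem: "e \<in> RW y k (r-1)" "e' \<in> RW y k (r-1)" "f \<in> CL k y (s-1)"
            using k(1,2) k'(1,2) c 2 True by auto
          have "RW y k (r-1) \<subseteq> walk_edges xs" using xs(2) seg_RW2[where a=k and b="r-1" and y=y, OF kr] by blast
          moreover have "CL k y (s-1) \<subseteq> walk_edges xs"
            using xs(2) seg_CL1[where a=y and b="s-1" and x=k, OF ys1] by blast
          ultimately have w: "e \<in> walk_edges xs" "e' \<in> walk_edges xs" "f \<in> walk_edges xs"
            using mem by blast+
          have n: "e \<noteq> e'" "e \<noteq> f" "e' \<noteq> f" using e'(2) k(1) k'(1) c(1) by auto
          show False by (rule no3[OF gp xs(1) k(3) k'(3) f(1) w n])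
        next
          case False
          have "\<exists>xs. geodesic (GV r s) GA xs \<and> seg (r-1,y) (k,y) \<union> seg (k,y) (k,0) \<subseteq> walk_edges xs"
            using r s y kk by (intro geo2) (auto simp: GV_iff md_def nd_def)
          then obtain xs where xs: "geodesic (GV r s) GA xs"
            "seg (r-1,y) (k,y) \<union> seg (k,y) (k,0) \<subseteq> walk_edges xs" by blast
          have mem: "e \<in> RW y k (r-1)" "e' \<in> RW y k (r-1)" "f \<in> CL k 0 y"
            using k(1,2) k'(1,2) c 2 False by auto
          have "RW y k (r-1) \<subseteq> walk_edges xs" using xs(2) seg_RW2[where a=k and b="r-1" and y=y, OF kr] by blast
          moreover have "CL k 0 y \<subseteq> walk_edges xs"
            using xs(2) seg_CL2[where a=0 and b=y and x=k, OF le0] by blast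
          ultimately have w: "e \<in> walk_edges xs" "e' \<in> walk_edges xs" "f \<in> walk_edges xs"
            using mem by blast+
          have n: "e \<noteq> e'" "e \<noteq> f" "e' \<noteq> f" using e'(2) k(1) k'(1) c(1) by auto
          show False by (rule no3[OF gp xs(1) k(3) k'(3) f(1) w n])
        qed
      qed
      then show ?thesis using k by simp
    qed
  qed
  have "card {hE 0 y, hE (r-2) y} = 2" using r by simp
  then show ?thesis using card_subset_eq[OF _ sub] c2 by simp
qed

lemma col_unique:
  assumes r: "5 \<le> r" and s: "5 \<le> s" and gp: "edge_gp_set (GV r s) GA S"
    and x: "1 \<le> x" "x \<le> r - 2" and c2: "card (S \<inter> CL x 0 (s-1)) = 2"
    and rows: "\<And>y. 1 \<le> y \<Longrightarrow> y \<le> s - 2 \<Longrightarrow> S \<inter> RW y 0 (r-1) \<noteq> {}"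
  shows "S \<inter> CL x 0 (s-1) = {vE x 0, vE x (s-2)}"
proof -
  have fS: "finite S" using gp by (rule gp_finite)
  have xr1: "x \<le> r - 1" using x by simp
  have sub: "S \<inter> CL x 0 (s-1) \<subseteq> {vE x 0, vE x (s-2)}"
  proof
    fix e assume e: "e \<in> S \<inter> CL x 0 (s-1)"
    then obtain k where k: "e = vE x k" "k < s - 1" "e \<in> S" by auto
    obtain e' where e': "e' \<in> S \<inter> CL x 0 (s-1)" "e' \<noteq> e" using card2_other[OF c2 e] by blast
    then obtain k' where k': "e' = vE x k'" "k' < s - 1" "e' \<in> S" "k' \<noteq> k" using k by auto
    consider "k' < k" | "k < k'" using k'(4) by linarith
    then show "e \<in> {vE x 0, vE x (s-2)}"
    proof cases
      case 1
      have "k = s - 2"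
      proof (rule ccontr)
        assume "k \<noteq> s - 2"
        then have kk: "1 \<le> Suc k" "Suc k \<le> s - 2" using k by auto
        obtain f where f: "f \<in> S" "f \<in> RW (Suc k) 0 (r-1)" using rows[OF kk] by blast
        then obtain c where c: "f = hE c (Suc k)" "c < r - 1" by auto
        show False
        proof (cases "x \<le> c")
          case True
          have "\<exists>xs. geodesic (GV r s) GA xs \<and> seg (x,0) (x,Suc k) \<union> seg (x,Suc k) (r-1,Suc k) \<subseteq> walk_edges xs"
            using r s x kk by (intro geo2) (auto simp: GV_iff md_def nd_def)
          then obtain xs where xs: "geodesic (GV r s) GA xs"
            "seg (x,0) (x,Suc k) \<union> seg (x,Suc k) (r-1,Suc k) \<subseteq> walk_edges xs" by blast
          have mem: "e \<in> CL x 0 (Suc k)" "e' \<in> CL x 0 (Suc k)" "f \<in> RW (Suc k) x (r-1)"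
            using k(1,2) k'(1,2) c 1 True by auto
          have "CL x 0 (Suc k) \<subseteq> walk_edges xs" using xs(2) seg_CL1[where a=0 and b="Suc k" and x=x, OF le0] by blast
          moreover have "RW (Suc k) x (r-1) \<subseteq> walk_edges xs"
            using xs(2) seg_RW1[where a=x and b="r-1" and y="Suc k", OF xr1] by blast
          ultimately have w: "e \<in> walk_edges xs" "e' \<in> walk_edges xs" "f \<in> walk_edges xs"
            using mem by blast+
          have n: "e \<noteq> e'" "e \<noteq> f" "e' \<noteq> f" using e'(2) k(1) k'(1) c(1) by auto
          show False by (rule no3[OF gp xs(1) k(3) k'(3) f(1) w n])
        next
          case False
          have "\<exists>xs. geodesic (GV r s) GA xs \<and> seg (x,0) (x,Suc k) \<union> seg (x,Suc k) (0,Suc k) \<subseteq> walk_edges xs"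
            using r s x kk by (intro geo2) (auto simp: GV_iff md_def nd_def)
          then obtain xs where xs: "geodesic (GV r s) GA xs"
            "seg (x,0) (x,Suc k) \<union> seg (x,Suc k) (0,Suc k) \<subseteq> walk_edges xs" by blast
          have mem: "e \<in> CL x 0 (Suc k)" "e' \<in> CL x 0 (Suc k)" "f \<in> RW (Suc k) 0 x"
            using k(1,2) k'(1,2) c 1 False by auto
          have "CL x 0 (Suc k) \<subseteq> walk_edges xs" using xs(2) seg_CL1[where a=0 and b="Suc k" and x=x, OF le0] by blast
          moreover have "RW (Suc k) 0 x \<subseteq> walk_edges xs"
            using xs(2) seg_RW2[where a=0 and b=x and y="Suc k", OF le0] by blast
          ultimately have w: "e \<in> walk_edges xs" "e' \<in> walk_edges xs" "f \<in> walk_edges xs"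
            using mem by blast+
          have n: "e \<noteq> e'" "e \<noteq> f" "e' \<noteq> f" using e'(2) k(1) k'(1) c(1) by auto
          show False by (rule no3[OF gp xs(1) k(3) k'(3) f(1) w n])
        qed
      qed
      then show ?thesis using k by simp
    next
      case 2
      have "k = 0"
      proof (rule ccontr)
        assume "k \<noteq> 0"
        then have kk: "1 \<le> k" "k \<le> s - 2" using k' 2 by auto
        have kr: "k \<le> s - 1" using kk by simp
        obtain f where f: "f \<in> S" "f \<in> RW k 0 (r-1)" using rows[OF kk] by blast
        then obtain c where c: "f = hE c k" "c < r - 1" by auto
        show False
        proof (cases "x \<le> c")
          case True
          have "\<exists>xs. geodesic (GV r s) GA xs \<and> seg (x,s-1) (x,k) \<union> seg (x,k) (r-1,k) \<subseteq> walk_edges xs"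
            using r s x kk by (intro geo2) (auto simp: GV_iff md_def nd_def)
          then obtain xs where xs: "geodesic (GV r s) GA xs"
            "seg (x,s-1) (x,k) \<union> seg (x,k) (r-1,k) \<subseteq> walk_edges xs" by blast
          have mem: "e \<in> CL x k (s-1)" "e' \<in> CL x k (s-1)" "f \<in> RW k x (r-1)"
            using k(1,2) k'(1,2) c 2 True by auto
          have "CL x k (s-1) \<subseteq> walk_edges xs" using xs(2) seg_CL2[where a=k and b="s-1" and x=x, OF kr] by blast
          moreover have "RW k x (r-1) \<subseteq> walk_edges xs"
            using xs(2) seg_RW1[where a=x and b="r-1" and y=k, OF xr1] by blast
          ultimately have w: "e \<in> walk_edges xs" "e' \<in> walk_edges xs" "f \<in> walk_edges xs"
            using mem by blast+
          have n: "e \<noteq> e'" "e \<noteq> f" "e' \<noteq> f" using e'(2) k(1) k'(1) c(1) by auto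
          show False by (rule no3[OF gp xs(1) k(3) k'(3) f(1) w n])
        next
          case False
          have "\<exists>xs. geodesic (GV r s) GA xs \<and> seg (x,s-1) (x,k) \<union> seg (x,k) (0,k) \<subseteq> walk_edges xs"
            using r s x kk by (intro geo2) (auto simp: GV_iff md_def nd_def)
          then obtain xs where xs: "geodesic (GV r s) GA xs"
            "seg (x,s-1) (x,k) \<union> seg (x,k) (0,k) \<subseteq> walk_edges xs" by blast
          have mem: "e \<in> CL x k (s-1)" "e' \<in> CL x k (s-1)" "f \<in> RW k 0 x"
            using k(1,2) k'(1,2) c 2 False by auto
          have "CL x k (s-1) \<subseteq> walk_edges xs" using xs(2) seg_CL2[where a=k and b="s-1" and x=x, OF kr] by blast
          moreover have "RW k 0 x \<subseteq> walk_edges xs"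
            using xs(2) seg_RW2[where a=0 and b=x and y=k, OF le0] by blast
          ultimately have w: "e \<in> walk_edges xs" "e' \<in> walk_edges xs" "f \<in> walk_edges xs"
            using mem by blast+
          have n: "e \<noteq> e'" "e \<noteq> f" "e' \<noteq> f" using e'(2) k(1) k'(1) c(1) by auto
          show False by (rule no3[OF gp xs(1) k(3) k'(3) f(1) w n])
        qed
      qed
      then show ?thesis using k by simp
    qed
  qed
  have "card {vE x 0, vE x (s-2)} = 2" using s by simp
  then show ?thesis using card_subset_eq[OF _ sub] c2 by simp
qed

lemma gpe_val:
  assumes r: "5 \<le> r" and s: "5 \<le> s"
  shows "gpe (GV r s) GA = 2 * (s - 2) + 2 * (r - 2)"
  unfolding gpe_def
proof (rule Max_eqI)
  have "{card S |S. edge_gp_set (GV r s) GA S} \<subseteq> card ` Pow (graph_edges (GV r s) GA)"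
    unfolding edge_gp_set_def by auto
  then show "finite {card S |S. edge_gp_set (GV r s) GA S}"
    using graph_edges_finite by (meson finite_Pow_iff finite_imageI finite_subset)
  show "\<And>y. y \<in> {card S |S. edge_gp_set (GV r s) GA S} \<Longrightarrow> y \<le> 2 * (s - 2) + 2 * (r - 2)"
    using main_bound(1)[OF r s] by blast
  show "2 * (s - 2) + 2 * (r - 2) \<in> {card S |S. edge_gp_set (GV r s) GA S}"
    using S0_gp[of r s] S0_card[of r s] r s by force
qed

lemma unique_S:
  assumes r: "5 \<le> r" and s: "5 \<le> s" and gp: "edge_gp_set (GV r s) GA S"
    and cS: "card S = 2 * (s - 2) + 2 * (r - 2)"
  shows "S = S0 r s"
proof -
  have fS: "finite S" using gp by (rule gp_finite)
  have mb: "card (S \<inter> RW 0 0 (r-1)) = 0 \<and> card (S \<inter> RW (s-1) 0 (r-1)) = 0 \<and>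
      card (S \<inter> CL 0 0 (s-1)) = 0 \<and> card (S \<inter> CL (r-1) 0 (s-1)) = 0 \<and>
      (\<forall>y\<in>{1..s-2}. card (S \<inter> RW y 0 (r-1)) = 2) \<and> (\<forall>x\<in>{1..r-2}. card (S \<inter> CL x 0 (s-1)) = 2)"
    using main_bound(2)[OF r s gp cS] by simp
  have e1: "S \<inter> RW 0 0 (r-1) = {}" "S \<inter> RW (s-1) 0 (r-1) = {}" "S \<inter> CL 0 0 (s-1) = {}" "S \<inter> CL (r-1) 0 (s-1) = {}"
    using mb fS by auto
  have rowsne: "S \<inter> RW y 0 (r-1) \<noteq> {}" if "1 \<le> y" "y \<le> s - 2" for y
  proof -
    have "card (S \<inter> RW y 0 (r-1)) = 2" using mb that by auto
    then show ?thesis by (metis card.empty zero_neq_numeral)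
  qed
  have colsne: "S \<inter> CL x 0 (s-1) \<noteq> {}" if "1 \<le> x" "x \<le> r - 2" for x
  proof -
    have "card (S \<inter> CL x 0 (s-1)) = 2" using mb that by auto
    then show ?thesis by (metis card.empty zero_neq_numeral)
  qed
  have hr: "S \<inter> RW y 0 (r-1) = {hE 0 y, hE (r-2) y}" if "1 \<le> y" "y \<le> s - 2" for y
    using row_unique[OF r s gp that _ colsne] mb that by simp
  have hc: "S \<inter> CL x 0 (s-1) = {vE x 0, vE x (s-2)}" if "1 \<le> x" "x \<le> r - 2" for x
    using col_unique[OF r s gp that _ rowsne] mb that by simp
  show ?thesis
  proof
    show "S \<subseteq> S0 r s"
    proof
      fix e assume e: "e \<in> S"
      then have "e \<in> (\<Union>y<s. RW y 0 (r-1)) \<union> (\<Union>x<r. CL x 0 (s-1))" using gp_cover[OF gp] by blast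
      then consider y where "y < s" "e \<in> RW y 0 (r-1)" | x where "x < r" "e \<in> CL x 0 (s-1)" by blast
      then show "e \<in> S0 r s"
      proof cases
        case 1
        have "y \<noteq> 0" "y \<noteq> s - 1" using 1 e e1 by auto
        then have y: "1 \<le> y" "y \<le> s - 2" using 1 by auto
        then have "e \<in> {hE 0 y, hE (r-2) y}" using hr[OF y] e 1 by blast
        then show ?thesis using y unfolding S0_def T0_def T1_def by auto
      next
        case 2
        have "x \<noteq> 0" "x \<noteq> r - 1" using 2 e e1 by auto
        then have x: "1 \<le> x" "x \<le> r - 2" using 2 by auto
        then have "e \<in> {vE x 0, vE x (s-2)}" using hc[OF x] e 2 by blast
        then show ?thesis using x unfolding S0_def T2_def T3_def by auto
      qed
    qed
  next
    show "S0 r s \<subseteq> S"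
    proof
      fix e assume "e \<in> S0 r s"
      then consider y where "1 \<le> y" "y \<le> s - 2" "e = hE 0 y \<or> e = hE (r-2) y"
        | x where "1 \<le> x" "x \<le> r - 2" "e = vE x 0 \<or> e = vE x (s-2)"
        unfolding S0_def T0_def T1_def T2_def T3_def by auto
      then show "e \<in> S"
      proof cases
        case 1 then show ?thesis using hr[OF 1(1,2)] by blast
      next
        case 2 then show ?thesis using hc[OF 2(1,2)] by blast
      qed
    qed
  qed
qed

theorem theorem4p2:
  fixes r s :: nat
  assumes "5 \<le> r" and "5 \<le> s"
  shows "\<exists>!S. gpe_set (cart_V (path_V r) (path_V s)) (cart_adj path_adj path_adj) S"
proof (rule ex1I[of _ "S0 r s"])
  show "gpe_set (cart_V (path_V r) (path_V s)) (cart_adj path_adj path_adj) (S0 r s)"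
    unfolding gpe_set_def using S0_gp[of r s] S0_card[of r s] gpe_val[OF assms] assms by simp
next
  fix S assume "gpe_set (cart_V (path_V r) (path_V s)) (cart_adj path_adj path_adj) S"
  then show "S = S0 r s" unfolding gpe_set_def using unique_S[OF assms] gpe_val[OF assms] by simp
qed

end
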